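(* Let $N\geq 2$ be an integer, let $I_0>0$, and let $0<\mu_{min}\leq\mu_{max}$ be given. For $K>0$, $\mu_1\in\mathbb{R}$ and $\varepsilon\geq 0$ define $$G_N(K,\mu_1,\varepsilon)=\frac{I_0}{K}\Big[(1+K\mu_1)^N+\big(1-K\mu_1(1+\varepsilon)\big)^N-2\Big].$$ Then for every $K>0$ there exists $\delta>0$ such that whenever $0\leq\varepsilon_{max}<\delta$, one has $G_N(K,\mu_1,\varepsilon)>0$ for all $\mu_1$ with $\mu_{min}\leq|\mu_1|\leq\mu_{max}$ and all $\varepsilon$ with $0\leq\varepsilon\leq\varepsilon_{max}$.
   Context: Interpretation: $G_N(K,\mu_1,\varepsilon)$ is the expected cumulative trading gain $\mathbb{E}[g(N)]$ after $N$ periods of a two-stock long-short linear feedback controller with initial investment $I_0$ and feedback parameter $K$, where the first stock has mean return $\mu_1$ and the second has mean return $(1+\varepsilon)\beta_0\mu_1$ with $\beta_0\neq 0$ known and $\varepsilon\in[0,\varepsilon_{max}]$ unknown. The corollary says that for any feedback parameter, positivity of the expected gain is robust once the correlation uncertainty bound $\varepsilon_{max}$ is small enough. *)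

theory Defs
  imports Complex_Main
begin

definition G :: "nat \<Rightarrow> real \<Rightarrow> real \<Rightarrow> real \<Rightarrow> real \<Rightarrow> real" where
  "G N I0 K mu1 eps = (I0 / K) * ((1 + K * mu1) ^ N + (1 - K * mu1 * (1 + eps)) ^ N - 2)"

end

theory Submission
  imports Defs
begin

lemma pq_bound:
  fixes x :: real
  shows "(1+x)^n + (1-x)^n \<ge> 2 + real n * (real n - 1) * x^2 \<and>
         x * ((1+x)^n - (1-x)^n) \<ge> 2 * real n * x^2"
proof (induction n)
  case 0 then show ?case by simp
next
  case (Suc n)
  define p where "p = (1+x)^n + (1-x)^n"
  define q where "q = (1+x)^n - (1-x)^n"
  have hp: "p \<ge> 2 + real n * (real n - 1) * x^2" and hq: "x*q \<ge> 2 * real n * x^2"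
    using Suc p_def q_def by auto
  have nn: "real n * (real n - 1) \<ge> 0" by (cases n) auto
  have p2: "p \<ge> 2" using hp nn by (smt (verit) mult_nonneg_nonneg zero_le_power2)
  have e1: "(1+x)^Suc n + (1-x)^Suc n = p + x*q" by (simp add: p_def q_def algebra_simps)
  have e2: "x*((1+x)^Suc n - (1-x)^Suc n) = x*q + x^2*p"
    by (simp add: p_def q_def algebra_simps power2_eq_square)
  have "x^2*p \<ge> x^2*2" using p2 by (simp add: mult_left_mono)
  then have A: "x * ((1+x)^Suc n - (1-x)^Suc n) \<ge> 2 * real (Suc n) * x^2"
    using e2 hq by (simp add: algebra_simps)
  have B: "(1+x)^Suc n + (1-x)^Suc n \<ge> 2 + real (Suc n) * (real (Suc n) - 1) * x^2"
    using e1 hp hq by (simp add: algebra_simps)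
  show ?case using A B by blast
qed

lemma pow_lip:
  fixes u v M :: real
  assumes "\<bar>u\<bar> \<le> M" "\<bar>v\<bar> \<le> M"
  shows "\<bar>u^Suc n - v^Suc n\<bar> \<le> real (Suc n) * M^n * \<bar>u - v\<bar>"
proof (induction n)
  case 0 then show ?case by simp
next
  case (Suc n)
  have M0: "M \<ge> 0" using assms by linarith
  have e: "u^Suc (Suc n) - v^Suc (Suc n) = u*(u^Suc n - v^Suc n) + v^Suc n*(u-v)"
    by (simp add: algebra_simps)
  have "\<bar>u*(u^Suc n - v^Suc n)\<bar> \<le> M * (real (Suc n) * M^n * \<bar>u - v\<bar>)"
    unfolding abs_mult by (rule mult_mono) (use assms Suc M0 in auto)
  moreover have "\<bar>v^Suc n*(u-v)\<bar> \<le> M^Suc n * \<bar>u-v\<bar>"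
  proof -
    have "\<bar>v\<bar>^Suc n \<le> M^Suc n" by (rule power_mono) (use assms in auto)
    then show ?thesis unfolding abs_mult power_abs by (rule mult_right_mono) simp
  qed
  ultimately have "\<bar>u^Suc (Suc n) - v^Suc (Suc n)\<bar> \<le> M * (real (Suc n) * M^n * \<bar>u - v\<bar>) + M^Suc n * \<bar>u-v\<bar>"
    unfolding e by (smt (verit) abs_triangle_ineq)
  then show ?case by (simp add: algebra_simps)
qed

theorem mainTheorem2:
  fixes N :: nat and I0 mu_min mu_max :: real
  assumes "N \<ge> 2" and "I0 > 0" and "0 < mu_min" and "mu_min \<le> mu_max"
  shows "\<forall>K>0. \<exists>\<delta>>0. \<forall>eps_max. 0 \<le> eps_max \<and> eps_max < \<delta> \<longrightarrow>
           (\<forall>mu1 eps. mu_min \<le> \<bar>mu1\<bar> \<and> \<bar>mu1\<bar> \<le> mu_max \<and> 0 \<le> eps \<and> eps \<le> eps_max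
              \<longrightarrow> G N I0 K mu1 eps > 0)"
proof (intro allI impI)
  fix K :: real assume K: "K > 0"
  obtain n where Nn: "N = Suc n" using assms(1) by (cases N) auto
  define a where "a = K * mu_min"
  define b where "b = K * mu_max"
  define M where "M = 1 + 2*b"
  define c where "c = real N * (real N - 1) * a^2"
  have a0: "a > 0" using K assms unfolding a_def by simp
  have ab: "a \<le> b" using K assms unfolding a_def b_def by simp
  have b0: "b > 0" using a0 ab by simp
  have M1: "M \<ge> 1" using b0 unfolding M_def by simp
  have c0: "c > 0" using assms(1) a0 unfolding c_def by simp
  define L where "L = real N * M^n * b"
  have L0: "L > 0"
  proof -
    have "M^n > 0" using M1 by simp
    moreover have "real N > 0" using assms(1) by simp
    ultimately show ?thesis unfolding L_def using b0 by simp
  qed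
  define \<delta> where "\<delta> = min 1 (c / L)"
  have d0: "\<delta> > 0" using c0 L0 unfolding \<delta>_def by simp
  show "\<exists>\<delta>>0. \<forall>eps_max. 0 \<le> eps_max \<and> eps_max < \<delta> \<longrightarrow>
           (\<forall>mu1 eps. mu_min \<le> \<bar>mu1\<bar> \<and> \<bar>mu1\<bar> \<le> mu_max \<and> 0 \<le> eps \<and> eps \<le> eps_max
              \<longrightarrow> G N I0 K mu1 eps > 0)"
  proof (intro exI[of _ \<delta>] conjI allI impI)
    show "\<delta> > 0" by (rule d0)
    fix eps_max mu1 eps
    assume em: "0 \<le> eps_max \<and> eps_max < \<delta>"
      and h: "mu_min \<le> \<bar>mu1\<bar> \<and> \<bar>mu1\<bar> \<le> mu_max \<and> 0 \<le> eps \<and> eps \<le> eps_max"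
    define x where "x = K * mu1"
    define y where "y = x * (1 + eps)"
    have ax: "a \<le> \<bar>x\<bar>" using h K unfolding a_def x_def abs_mult by simp
    have xb: "\<bar>x\<bar> \<le> b" using h K unfolding b_def x_def abs_mult by simp
    have e1: "eps < 1" "eps < c / L" using em h unfolding \<delta>_def by auto
    have e0: "eps \<ge> 0" using h by simp
    have x2: "x^2 \<ge> a^2"
    proof -
      have "a^2 \<le> \<bar>x\<bar>^2" by (rule power_mono) (use ax a0 in auto)
      then show ?thesis by simp
    qed
    have p: "(1+x)^N + (1-x)^N \<ge> 2 + c"
    proof -
      have "(1+x)^N + (1-x)^N \<ge> 2 + real N * (real N - 1) * x^2" using pq_bound by blast
      moreover have "real N * (real N - 1) * x^2 \<ge> real N * (real N - 1) * a^2"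
        using x2 assms(1) by (intro mult_left_mono) auto
      ultimately show ?thesis unfolding c_def by linarith
    qed
    have yb: "\<bar>y\<bar> \<le> 2*b"
    proof -
      have "\<bar>x\<bar> * \<bar>1+eps\<bar> \<le> b * 2" by (rule mult_mono) (use xb e0 e1 b0 in auto)
      then show ?thesis unfolding y_def abs_mult by simp
    qed
    have u: "\<bar>1-y\<bar> \<le> M" using yb unfolding M_def by linarith
    have v: "\<bar>1-x\<bar> \<le> M" using xb b0 unfolding M_def by linarith
    have dif: "\<bar>(1-y) - (1-x)\<bar> = \<bar>x\<bar> * eps" unfolding y_def using e0
      by (simp add: algebra_simps abs_mult)
    have "\<bar>(1-y)^N - (1-x)^N\<bar> \<le> real N * M^n * (\<bar>x\<bar> * eps)"
      using pow_lip[OF u v, of n] dif Nn by simp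
    also have "\<dots> \<le> real N * M^n * (b * eps)"
    proof -
      have "\<bar>x\<bar> * eps \<le> b * eps" by (rule mult_right_mono) (use xb e0 in auto)
      moreover have "real N * M^n \<ge> 0" using M1 by simp
      ultimately show ?thesis by (rule mult_left_mono)
    qed
    also have "\<dots> = L * eps" unfolding L_def by simp
    also have "\<dots> < c" using e1(2) L0 by (simp add: field_simps)
    finally have pert: "\<bar>(1-y)^N - (1-x)^N\<bar> < c" .
    have pos: "(1 + x)^N + (1 - y)^N - 2 > 0" using p pert by linarith
    have "G N I0 K mu1 eps = (I0 / K) * ((1 + x)^N + (1 - y)^N - 2)"
      unfolding G_def x_def y_def by (simp add: algebra_simps)
    then show "G N I0 K mu1 eps > 0" using pos assms(2) K by simp
  qed
qed

end
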